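(* Let $D$ be a finite digraph and let $T$ be a maximum induced acyclic subdigraph of $D$ (i.e., $V(T)$ is a vertex set of maximum size such that $D[V(T)]$ is acyclic). Then there exists a path partition $\mathcal{P}$ of $D$ orthogonal to $T$, that is, every path of $\mathcal{P}$ contains exactly one vertex of $T$.
   Context: A path partition of $D$ is a collection of vertex-disjoint directed paths of $D$ covering $V(D)$. *)

theory Defs
  imports Main
begin

definition digraph :: "'a set \<Rightarrow> ('a \<times> 'a) set \<Rightarrow> bool" where
  "digraph V E \<longleftrightarrow> finite V \<and> E \<subseteq> V \<times> V \<and> (\<forall>v. (v, v) \<notin> E)"

definition induced_acyclic :: "('a \<times> 'a) set \<Rightarrow> 'a set \<Rightarrow> bool" where
  "induced_acyclic E S \<longleftrightarrow> acyclic (Restr E S)"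

definition max_induced_acyclic :: "'a set \<Rightarrow> ('a \<times> 'a) set \<Rightarrow> 'a set \<Rightarrow> bool" where
  "max_induced_acyclic V E T \<longleftrightarrow> T \<subseteq> V \<and> induced_acyclic E T \<and>
     (\<forall>S. S \<subseteq> V \<and> induced_acyclic E S \<longrightarrow> card S \<le> card T)"

definition dipath :: "'a set \<Rightarrow> ('a \<times> 'a) set \<Rightarrow> 'a list \<Rightarrow> bool" where
  "dipath V E p \<longleftrightarrow> p \<noteq> [] \<and> distinct p \<and> set p \<subseteq> V \<and>
     (\<forall>i. Suc i < length p \<longrightarrow> (p ! i, p ! Suc i) \<in> E)"

definition path_partition :: "'a set \<Rightarrow> ('a \<times> 'a) set \<Rightarrow> 'a list set \<Rightarrow> bool" where
  "path_partition V E P \<longleftrightarrow> (\<forall>p\<in>P. dipath V E p) \<and>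
     (\<forall>p\<in>P. \<forall>q\<in>P. p \<noteq> q \<longrightarrow> set p \<inter> set q = {}) \<and>
     (\<Union>p\<in>P. set p) = V"

definition orthogonal :: "'a list set \<Rightarrow> 'a set \<Rightarrow> bool" where
  "orthogonal P T \<longleftrightarrow> (\<forall>p\<in>P. card (set p \<inter> T) = 1)"

end

theory Submission
  imports Defs
begin

lemma pp_hd_inj:
  assumes "path_partition V E P"
  shows "inj_on hd P"
proof (rule inj_onI)
  fix p q assume pq: "p \<in> P" "q \<in> P" "hd p = hd q"
  have "p \<noteq> []" "q \<noteq> []" using assms pq unfolding path_partition_def dipath_def by auto
  hence "hd p \<in> set p \<inter> set q" using pq by (metis IntI hd_in_set)
  thus "p = q" using assms pq unfolding path_partition_def by blast
qed

lemma pp_hd_sub: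
  assumes "path_partition V E P"
  shows "hd ` P \<subseteq> V"
proof
  fix v assume "v \<in> hd ` P"
  then obtain p where p: "p \<in> P" "v = hd p" by auto
  hence "p \<noteq> []" "set p \<subseteq> V" using assms unfolding path_partition_def dipath_def by auto
  thus "v \<in> V" using p by auto
qed

lemma pp_finite:
  assumes "finite V" "path_partition V E P"
  shows "finite P"
  using finite_imageD[OF finite_subset[OF pp_hd_sub[OF assms(2)] assms(1)] pp_hd_inj[OF assms(2)]] .

lemma pp_set_sub:
  assumes "path_partition V E P" "p \<in> P"
  shows "set p \<subseteq> V"
  using assms unfolding path_partition_def dipath_def by auto

lemma pp_prepend:
  assumes pp: "path_partition W E Q" and q: "q \<in> Q" and x: "x \<notin> W"
    and e: "(x, hd q) \<in> E"
  shows "path_partition (insert x W) E (insert (x#q) (Q - {q}))"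
proof -
  have dq: "dipath W E q" using pp q unfolding path_partition_def by auto
  have xq: "x \<notin> set q" using pp_set_sub[OF pp q] x by auto
  have "dipath (insert x W) E (x#q)"
    unfolding dipath_def
  proof (intro conjI allI impI)
    show "distinct (x#q)" using dq xq unfolding dipath_def by auto
    show "set (x#q) \<subseteq> insert x W" using dq unfolding dipath_def by auto
    fix i assume i: "Suc i < length (x#q)"
    show "((x#q) ! i, (x#q) ! Suc i) \<in> E"
    proof (cases i)
      case 0 thus ?thesis using e dq unfolding dipath_def by (simp add: hd_conv_nth)
    next
      case (Suc j) thus ?thesis using i dq unfolding dipath_def by auto
    qed
  qed simp
  moreover have "\<forall>p\<in>Q - {q}. dipath (insert x W) E p"
    using pp unfolding path_partition_def dipath_def by blast
  moreover have "\<forall>p\<in>Q - {q}. set p \<inter> set (x#q) = {}"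
  proof
    fix p assume p: "p \<in> Q - {q}"
    have "x \<notin> set p" using pp_set_sub[OF pp] p x by blast
    moreover have "set p \<inter> set q = {}" using pp p q unfolding path_partition_def by blast
    ultimately show "set p \<inter> set (x#q) = {}" by auto
  qed
  moreover have "\<forall>p\<in>Q - {q}. \<forall>r\<in>Q - {q}. p \<noteq> r \<longrightarrow> set p \<inter> set r = {}"
    using pp unfolding path_partition_def by blast
  moreover have "(\<Union>p\<in>insert (x#q) (Q - {q}). set p) = insert x W"
  proof -
    have "(\<Union>p\<in>Q. set p) = W" using pp unfolding path_partition_def by blast
    thus ?thesis using q by auto
  qed
  ultimately show ?thesis unfolding path_partition_def by (auto simp del: set_simps)
qed

lemma pp_prepend_card:
  assumes pp: "path_partition W E Q" and q: "q \<in> Q" and x: "x \<notin> W" and f: "finite Q"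
  shows "card (insert (x#q) (Q - {q})) = card Q"
proof -
  have "x#q \<notin> Q - {q}" using pp_set_sub[OF pp] x by fastforce
  moreover have "card Q > 0" using f q card_gt_0_iff by blast
  ultimately show ?thesis using f q by (simp add: card_Diff_singleton)
qed


lemma pp_tail:
  assumes pp: "path_partition V E P" and px: "x#p' \<in> P" and ne: "p' \<noteq> []"
  shows "path_partition (V - {x}) E (insert p' (P - {x#p'}))"
    and "(x, hd p') \<in> E"
    and "finite P \<Longrightarrow> card (insert p' (P - {x#p'})) = card P"
proof -
  have dx: "dipath V E (x#p')" using pp px unfolding path_partition_def by auto
  have xn: "x \<notin> set p'" using dx unfolding dipath_def by auto
  have others: "\<And>r. r \<in> P - {x#p'} \<Longrightarrow> set r \<inter> set (x#p') = {}"
    using pp px unfolding path_partition_def by blast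
  have "dipath (V - {x}) E p'"
    unfolding dipath_def
  proof (intro conjI allI impI)
    show "p' \<noteq> []" by fact
    show "distinct p'" using dx unfolding dipath_def by auto
    show "set p' \<subseteq> V - {x}" using dx xn unfolding dipath_def by auto
    fix i assume i: "Suc i < length p'"
    have "((x#p') ! Suc i, (x#p') ! Suc (Suc i)) \<in> E"
      using dx i unfolding dipath_def by (metis length_Cons Suc_less_eq)
    thus "(p' ! i, p' ! Suc i) \<in> E" by simp
  qed
  moreover have "\<forall>r\<in>P - {x#p'}. dipath (V - {x}) E r"
  proof
    fix r assume r: "r \<in> P - {x#p'}"
    hence "dipath V E r" using pp unfolding path_partition_def by auto
    moreover have "x \<notin> set r" using others[OF r] by auto
    ultimately show "dipath (V - {x}) E r" unfolding dipath_def by auto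
  qed
  moreover have "\<forall>r\<in>P - {x#p'}. set r \<inter> set p' = {}" using others by auto
  moreover have "\<forall>p\<in>P - {x#p'}. \<forall>r\<in>P - {x#p'}. p \<noteq> r \<longrightarrow> set p \<inter> set r = {}"
    using pp unfolding path_partition_def by blast
  moreover have "(\<Union>p\<in>insert p' (P - {x#p'}). set p) = V - {x}"
  proof -
    have U: "(\<Union>p\<in>P. set p) = V" using pp unfolding path_partition_def by blast
    have "(\<Union>p\<in>insert p' (P - {x#p'}). set p) = (\<Union>p\<in>P. set p) - {x}"
    proof
      show "(\<Union>p\<in>insert p' (P - {x#p'}). set p) \<subseteq> (\<Union>p\<in>P. set p) - {x}"
        using xn others px by fastforce
      show "(\<Union>p\<in>P. set p) - {x} \<subseteq> (\<Union>p\<in>insert p' (P - {x#p'}). set p)"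
        by auto
    qed
    thus ?thesis using U by simp
  qed
  ultimately show "path_partition (V - {x}) E (insert p' (P - {x#p'}))"
    unfolding path_partition_def by (auto simp del: set_simps)
  show "(x, hd p') \<in> E" using dx ne unfolding dipath_def
    by (metis hd_conv_nth length_Cons length_greater_0_conv nth_Cons_0 nth_Cons_Suc zero_less_Suc Suc_less_eq)
  assume f: "finite P"
  have "p' \<notin> P - {x#p'}"
  proof
    assume "p' \<in> P - {x#p'}"
    hence "set p' \<inter> set (x#p') = {}" using others by blast
    thus False using ne by (cases p') auto
  qed
  moreover have "card P > 0" using f px card_gt_0_iff by blast
  ultimately show "card (insert p' (P - {x#p'})) = card P" using f px
    by (simp add: card_Diff_singleton)
qed

lemma cyc_arc:
  assumes aT: "acyclic (Restr E T)" and nB: "\<not> acyclic (Restr E B)"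
  shows "\<exists>x y. x \<in> B \<and> x \<notin> T \<and> y \<in> B \<and> (x,y) \<in> E"
proof (rule ccontr)
  assume H: "\<not> ?thesis"
  have key: "(a,b) \<in> (Restr E B)\<^sup>+ \<Longrightarrow> a \<in> T \<and> (b \<in> T \<longrightarrow> (a,b) \<in> (Restr E T)\<^sup>+)" for a b
  proof (induction rule: converse_trancl_induct)
    case (base a)
    hence "(a,b) \<in> E" "a \<in> B" "b \<in> B" by auto
    hence "a \<in> T" using H by blast
    thus ?case using \<open>(a,b) \<in> E\<close> by blast
  next
    case (step a c)
    have ac: "(a,c) \<in> E" "a \<in> B" "c \<in> B" using step.hyps(1) by auto
    have aT: "a \<in> T" using H ac by blast
    have "b \<in> T \<Longrightarrow> (a,b) \<in> (Restr E T)\<^sup>+"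
    proof -
      assume bT: "b \<in> T"
      have "(a,c) \<in> Restr E T" using ac aT step.IH by blast
      thus ?thesis using step.IH bT by (meson trancl_into_trancl2)
    qed
    thus ?case using aT by blast
  qed
  obtain z where "(z,z) \<in> (Restr E B)\<^sup>+" using nB unfolding acyclic_def by blast
  with key have "(z,z) \<in> (Restr E T)\<^sup>+" by blast
  thus False using aT unfolding acyclic_def by blast
qed


lemma gm:
  assumes "finite V" "\<forall>v. (v,v) \<notin> E" "acyclic (Restr E T)"
    "path_partition V E P" "\<forall>p\<in>P. card (set p \<inter> T) \<le> 1"
    "\<forall>S. S \<subseteq> V \<and> acyclic (Restr E S) \<longrightarrow> card S \<le> m"
    "card P > m"
  shows "\<exists>Q. path_partition V E Q \<and> (\<forall>p\<in>Q. card (set p \<inter> T) \<le> 1)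
           \<and> card Q = card P - 1 \<and> hd ` Q \<subseteq> hd ` P"
  using assms
proof (induction "card V" arbitrary: V P rule: less_induct)
  case less
  note fV = less.prems(1) and nl = less.prems(2) and aT = less.prems(3)
    and pp = less.prems(4) and tc = less.prems(5) and mx = less.prems(6) and cP = less.prems(7)
  have fP: "finite P" using pp_finite[OF fV pp] .
  let ?B = "hd ` P"
  have cB: "card ?B = card P" using card_image[OF pp_hd_inj[OF pp]] .
  have "\<not> acyclic (Restr E ?B)"
    using mx pp_hd_sub[OF pp] cB cP by force
  then obtain x y where xy: "x \<in> ?B" "x \<notin> T" "y \<in> ?B" "(x,y) \<in> E"
    using cyc_arc[OF aT] by blast
  have xny: "x \<noteq> y" using nl xy by metis
  obtain px where px: "px \<in> P" "hd px = x" using xy by auto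
  obtain py where py: "py \<in> P" "hd py = y" using xy by auto
  have pxy: "px \<noteq> py" using px py xny by auto
  have c2: "card P \<ge> 2"
  proof -
    have "{px, py} \<subseteq> P" using px py by auto
    hence "card {px,py} \<le> card P" using fP card_mono by blast
    thus ?thesis using pxy by simp
  qed
  have pxne: "px \<noteq> []" using pp px unfolding path_partition_def dipath_def by auto
  then obtain p' where pxd: "px = x # p'" using px by (cases px) auto
  show ?case
  proof (cases "p' = []")
    case True
    let ?W = "V - {x}"
    let ?RR = "P - {px}"
    have pp0: "path_partition ?W E ?RR"
      unfolding path_partition_def
    proof (intro conjI)
      show "\<forall>p\<in>?RR. dipath ?W E p"
      proof
        fix r assume r: "r \<in> ?RR"
        hence "set r \<inter> set px = {}" using pp px unfolding path_partition_def by blast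
        hence "x \<notin> set r" using pxd by auto
        moreover have "dipath V E r" using r pp unfolding path_partition_def by auto
        ultimately show "dipath ?W E r" unfolding dipath_def by auto
      qed
      show "\<forall>p\<in>?RR. \<forall>q\<in>?RR. p \<noteq> q \<longrightarrow> set p \<inter> set q = {}"
        using pp unfolding path_partition_def by blast
      have U: "(\<Union>p\<in>P. set p) = V" using pp unfolding path_partition_def by blast
      have D: "\<forall>r\<in>?RR. x \<notin> set r"
      proof
        fix r assume r: "r \<in> ?RR"
        hence "set r \<inter> set px = {}" using pp px unfolding path_partition_def by blast
        thus "x \<notin> set r" using pxd by auto
      qed
      show "(\<Union>p\<in>?RR. set p) = ?W"
      proof
        show "(\<Union>p\<in>?RR. set p) \<subseteq> ?W" using U D by blast
        show "?W \<subseteq> (\<Union>p\<in>?RR. set p)" using U pxd True px by auto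
      qed
    qed
    have pyQ: "py \<in> ?RR" using py pxy by auto
    have xW: "x \<notin> ?W" by simp
    let ?Q = "insert (x#py) (?RR - {py})"
    have "insert x ?W = V" using xy pp_hd_sub[OF pp] by auto
    hence ppQ: "path_partition V E ?Q" using pp_prepend[OF pp0 pyQ xW] py xy by simp
    have fRR: "finite ?RR" using fP by simp
    have cQ: "card ?Q = card ?RR" using pp_prepend_card[OF pp0 pyQ xW fRR] .
    have "card ?RR = card P - 1" using fP px by simp
    moreover have "\<forall>p\<in>?Q. card (set p \<inter> T) \<le> 1" using tc xy py by auto
    moreover have "hd ` ?Q \<subseteq> hd ` P" using xy by auto
    ultimately show ?thesis using ppQ cQ by metis
  next
    case False
    let ?W = "V - {x}"
    let ?P2 = "insert p' (P - {px})"
    have pp2: "path_partition ?W E ?P2" using pp_tail(1)[OF pp _ False] px pxd by simp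
    have exx: "(x, hd p') \<in> E" using pp_tail(2)[OF pp _ False] px pxd by simp
    have cP2: "card ?P2 = card P" using pp_tail(3)[OF pp _ False] px pxd fP by simp
    have tc2: "\<forall>p\<in>?P2. card (set p \<inter> T) \<le> 1"
    proof
      fix p assume "p \<in> ?P2"
      moreover have "card (set p' \<inter> T) \<le> card (set px \<inter> T)"
        using pxd by (intro card_mono) auto
      ultimately show "card (set p \<inter> T) \<le> 1" using tc px by fastforce
    qed
    have xV: "x \<in> V" using xy pp_hd_sub[OF pp] by auto
    have lt: "card ?W < card V" using card_Diff1_less[OF fV xV] .
    have mx2: "\<forall>S. S \<subseteq> ?W \<and> acyclic (Restr E S) \<longrightarrow> card S \<le> m" using mx by blast
    obtain Q' where Q': "path_partition ?W E Q'" "\<forall>p\<in>Q'. card (set p \<inter> T) \<le> 1"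
        "card Q' = card ?P2 - 1" "hd ` Q' \<subseteq> hd ` ?P2"
      using less.hyps[OF lt _ nl aT pp2 tc2 mx2] cP2 cP fV by auto
    have fQ': "finite Q'" using pp_finite[OF _ Q'(1)] fV by simp
    have xW: "x \<notin> ?W" by simp
    have hinj: "inj_on hd Q'" using pp_hd_inj[OF Q'(1)] .
    have hP2: "hd ` ?P2 = insert (hd p') (hd ` (P - {px}))" by simp
    have gen: "\<exists>Q. path_partition V E Q \<and> (\<forall>p\<in>Q. card (set p \<inter> T) \<le> 1)
           \<and> card Q = card P - 1 \<and> hd ` Q \<subseteq> hd ` P"
      if q: "q \<in> Q'" "(x, hd q) \<in> E" "hd ` (Q' - {q}) \<subseteq> hd ` P" for q
    proof -
      let ?Q = "insert (x#q) (Q' - {q})"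
      have "insert x ?W = V" using xV by auto
      hence ppQ: "path_partition V E ?Q" using pp_prepend[OF Q'(1) q(1) xW q(2)] by simp
      have "card ?Q = card Q'" using pp_prepend_card[OF Q'(1) q(1) xW fQ'] .
      moreover have "\<forall>p\<in>?Q. card (set p \<inter> T) \<le> 1" using Q'(2) xy q by auto
      moreover have "hd ` ?Q \<subseteq> hd ` P" using q xy by auto
      ultimately show ?thesis using ppQ Q'(3) cP2 by metis
    qed
    show ?thesis
    proof (cases "hd p' \<in> hd ` Q'")
      case True
      then obtain q where q: "q \<in> Q'" "hd q = hd p'" by auto
      have "hd ` (Q' - {q}) \<subseteq> hd ` P"
      proof
        fix v assume "v \<in> hd ` (Q' - {q})"
        then obtain r where r: "r \<in> Q'" "r \<noteq> q" "v = hd r" by auto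
        have "v \<noteq> hd p'" using hinj r q unfolding inj_on_def by metis
        moreover have "v \<in> hd ` ?P2" using Q'(4) r by auto
        ultimately show "v \<in> hd ` P" by auto
      qed
      thus ?thesis using gen q exx by simp
    next
      case nh: False
      show ?thesis
      proof (cases "y \<in> hd ` Q'")
        case True
        then obtain q where q: "q \<in> Q'" "hd q = y" by auto
        have "hd ` (Q' - {q}) \<subseteq> hd ` P"
        proof
          fix v assume "v \<in> hd ` (Q' - {q})"
          then obtain r where r: "r \<in> Q'" "v = hd r" by auto
          have "v \<noteq> hd p'" using nh r by (metis image_eqI)
          moreover have "v \<in> hd ` ?P2" using Q'(4) r by auto
          ultimately show "v \<in> hd ` P" by auto
        qed
        thus ?thesis using gen q xy by simp
      next
        case False
        have sub: "hd ` Q' \<subseteq> hd ` (P - {px}) - {y}"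
        proof
          fix v assume v: "v \<in> hd ` Q'"
          hence "v \<in> insert (hd p') (hd ` (P - {px}))" using Q'(4) hP2 by blast
          moreover have "v \<noteq> hd p'" using v nh by blast
          moreover have "v \<noteq> y" using v False by blast
          ultimately show "v \<in> hd ` (P - {px}) - {y}" by blast
        qed
        have yin: "y \<in> hd ` (P - {px})" using py pxy by auto
        have "card (hd ` Q') \<le> card (hd ` (P - {px}) - {y})"
          using sub fP by (intro card_mono) auto
        also have "\<dots> = card (hd ` (P - {px})) - 1" using yin fP by simp
        also have "\<dots> \<le> card (P - {px}) - 1" using fP card_image_le by (metis diff_le_mono finite_Diff)
        also have "\<dots> = card P - 2" using fP px by simp
        finally have "card Q' \<le> card P - 2" using card_image[OF hinj] by simp
        hence False using Q'(3) cP2 c2 by simp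
        thus ?thesis ..
      qed
    qed
  qed
qed


theorem mainTheorem3:
  fixes V :: "'a set" and E :: "('a \<times> 'a) set" and T :: "'a set"
  assumes "digraph V E"
    and "max_induced_acyclic V E T"
  shows "\<exists>P. path_partition V E P \<and> orthogonal P T"
proof -
  have fV: "finite V" and nl: "\<forall>v. (v,v) \<notin> E" using assms(1) unfolding digraph_def by auto
  have TV: "T \<subseteq> V" and aT: "acyclic (Restr E T)"
    and mx: "\<forall>S. S \<subseteq> V \<and> acyclic (Restr E S) \<longrightarrow> card S \<le> card T"
    using assms(2) unfolding max_induced_acyclic_def induced_acyclic_def by auto
  let ?G = "\<lambda>P. path_partition V E P \<and> (\<forall>p\<in>P. card (set p \<inter> T) \<le> 1)"
  have red: "\<And>n P. ?G P \<Longrightarrow> card P = n \<Longrightarrow> \<exists>Q. ?G Q \<and> card Q \<le> card T"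
  proof -
    fix n show "\<And>P. ?G P \<Longrightarrow> card P = n \<Longrightarrow> \<exists>Q. ?G Q \<and> card Q \<le> card T"
    proof (induction n rule: less_induct)
      case (less n P)
      show ?case
      proof (cases "card P \<le> card T")
        case True thus ?thesis using less.prems by blast
      next
        case False
        then obtain Q where Q: "?G Q" "card Q = card P - 1"
          using gm[OF fV nl aT _ _ mx, of P] less.prems by auto
        show ?thesis using less.IH[of "card Q" Q] Q less.prems False by auto
      qed
    qed
  qed
  let ?P0 = "(\<lambda>v. [v]) ` V"
  have "path_partition V E ?P0" unfolding path_partition_def dipath_def by auto
  moreover have "\<forall>p\<in>?P0. card (set p \<inter> T) \<le> 1"
  proof
    fix p assume "p \<in> ?P0"
    then obtain v where "p = [v]" by auto
    hence "set p \<inter> T \<subseteq> {v}" by auto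
    hence "card (set p \<inter> T) \<le> card {v}" by (intro card_mono) auto
    thus "card (set p \<inter> T) \<le> 1" by simp
  qed
  ultimately obtain Q where Q: "?G Q" "card Q \<le> card T" using red by blast
  have ppQ: "path_partition V E Q" using Q by simp
  have fQ: "finite Q" using pp_finite[OF fV ppQ] .
  have fT: "finite T" using fV TV finite_subset by blast
  have TU: "T = (\<Union>p\<in>Q. set p \<inter> T)" using ppQ TV unfolding path_partition_def by blast
  have "card T = (\<Sum>p\<in>Q. card (set p \<inter> T))"
  proof -
    have "card (\<Union>p\<in>Q. set p \<inter> T) = (\<Sum>p\<in>Q. card (set p \<inter> T))"
      using fQ ppQ unfolding path_partition_def
      by (intro card_UN_disjoint) auto
    thus ?thesis using TU by simp
  qed
  have "orthogonal Q T"
    unfolding orthogonal_def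
  proof (rule ccontr)
    assume "\<not> (\<forall>p\<in>Q. card (set p \<inter> T) = 1)"
    then obtain p0 where p0: "p0 \<in> Q" "card (set p0 \<inter> T) \<noteq> 1" by auto
    have "(\<Sum>p\<in>Q. card (set p \<inter> T)) < (\<Sum>p\<in>Q. (1::nat))"
    proof (rule sum_strict_mono_ex1[OF fQ])
      show "\<forall>p\<in>Q. card (set p \<inter> T) \<le> 1" using Q by simp
      have "card (set p0 \<inter> T) \<le> 1" using p0 Q(1) by blast
      hence "card (set p0 \<inter> T) < 1" using p0(2) by linarith
      thus "\<exists>p\<in>Q. card (set p \<inter> T) < 1" using p0(1) by blast
    qed
    thus False using \<open>card T = _\<close> Q(2) by simp
  qed
  thus ?thesis using ppQ by blast
qed

end
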